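(* For integers $n \geq 3$ and $m \geq 1$, $$\chi_\rho(FSSD_m(C_n)) = \begin{cases} 3, & n \text{ even},\\ 4, & n \text{ odd}.\end{cases}$$
   Context: All graphs are finite and simple. $C_n$ is the cycle on $n$ vertices. For a positive integer $i$, an $i$-packing in a graph is a set of vertices any two distinct members of which are at distance greater than $i$. The packing chromatic number $\chi_\rho(H)$ is the smallest integer $k$ such that $V(H)$ can be partitioned into sets $V_1,\dots,V_k$ with each $V_i$ an $i$-packing. For a positive integer $m$, $FSSD_m(G)$ is obtained from $G$ by replacing each edge $uv$ of $G$ by a copy of $K_{2,m}$: the edge $uv$ is deleted and $m$ new vertices are added, each adjacent to exactly $u$ and $v$. *)

theory Defs
  imports Main "HOL-Library.Extended_Nat"
begin

type_synonym 'a graph = "'a set \<times> 'a set set"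

definition simple_graph :: "'a graph \<Rightarrow> bool" where
  "simple_graph G \<longleftrightarrow> finite (fst G) \<and>
     (\<forall>e\<in>snd G. \<exists>u v. e = {u, v} \<and> u \<noteq> v \<and> u \<in> fst G \<and> v \<in> fst G)"

definition adj :: "'a graph \<Rightarrow> 'a \<Rightarrow> 'a \<Rightarrow> bool" where
  "adj G u v \<longleftrightarrow> {u, v} \<in> snd G"

definition walk :: "'a graph \<Rightarrow> 'a list \<Rightarrow> bool" where
  "walk G xs \<longleftrightarrow> xs \<noteq> [] \<and> set xs \<subseteq> fst G \<and>
     (\<forall>j. Suc j < length xs \<longrightarrow> adj G (xs ! j) (xs ! Suc j))"

text \<open>Graph distance (infinite if no walk exists).\<close>
definition gdist :: "'a graph \<Rightarrow> 'a \<Rightarrow> 'a \<Rightarrow> enat" where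
  "gdist G u v = Inf {enat (length xs - 1) | xs. walk G xs \<and> hd xs = u \<and> last xs = v}"

definition packing :: "'a graph \<Rightarrow> nat \<Rightarrow> 'a set \<Rightarrow> bool" where
  "packing G i S \<longleftrightarrow> S \<subseteq> fst G \<and>
     (\<forall>u\<in>S. \<forall>v\<in>S. u \<noteq> v \<longrightarrow> gdist G u v > enat i)"

text \<open>V can be partitioned into V_1, ..., V_k with V_i an i-packing
  (empty classes allowed), expressed by the colouring c with V_i = c^{-1}(i).\<close>
definition packing_colorable :: "'a graph \<Rightarrow> nat \<Rightarrow> bool" where
  "packing_colorable G k \<longleftrightarrow> (\<exists>c :: 'a \<Rightarrow> nat.
     (\<forall>v\<in>fst G. c v \<in> {1..k}) \<and>
     (\<forall>i\<in>{1..k}. packing G i {v \<in> fst G. c v = i}))"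

definition packing_chromatic_number :: "'a graph \<Rightarrow> nat" where
  "packing_chromatic_number G = (LEAST k. packing_colorable G k)"

definition cycle_graph :: "nat \<Rightarrow> nat graph" where
  "cycle_graph n = ({0..<n}, {{i, (i + 1) mod n} | i. i < n})"

text \<open>FSSD_m(G): each edge uv is deleted and m new vertices (e, j), j < m, are added,
  each adjacent exactly to u and v.  Original vertices are tagged Inl.\<close>
definition FSSD :: "nat \<Rightarrow> 'a graph \<Rightarrow> ('a + ('a set \<times> nat)) graph" where
  "FSSD m G = (Inl ` fst G \<union> {Inr (e, j) | e j. e \<in> snd G \<and> j < m},
     {{Inl u, Inr (e, j)} | u e j. e \<in> snd G \<and> j < m \<and> u \<in> e})"

end

theory Submission
  imports Defs
begin

lemma adj_FSSD_Inl_Inl: "\<not> adj (FSSD m G) (Inl a) (Inl b)"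
  by (auto simp: adj_def FSSD_def doubleton_eq_iff)

lemma adj_FSSD_Inr_Inr: "\<not> adj (FSSD m G) (Inr p) (Inr q)"
  by (auto simp: adj_def FSSD_def doubleton_eq_iff)

lemma adj_FSSD_Inl_Inr: "adj (FSSD m G) (Inl a) (Inr (e, j)) \<longleftrightarrow> e \<in> snd G \<and> j < m \<and> a \<in> e"
  by (auto simp: adj_def FSSD_def doubleton_eq_iff)

lemma adj_FSSD_Inr_Inl: "adj (FSSD m G) (Inr (e, j)) (Inl a) \<longleftrightarrow> e \<in> snd G \<and> j < m \<and> a \<in> e"
  by (auto simp: adj_def FSSD_def doubleton_eq_iff)

lemma gdist_le: "walk G xs \<Longrightarrow> hd xs = u \<Longrightarrow> last xs = v \<Longrightarrow> gdist G u v \<le> enat (length xs - 1)"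
  unfolding gdist_def by (rule Inf_lower) blast

lemma gdist_gt:
  assumes "\<And>xs. walk G xs \<Longrightarrow> hd xs = u \<Longrightarrow> last xs = v \<Longrightarrow> d < length xs - 1"
  shows "enat d < gdist G u v"
proof -
  have "enat (Suc d) \<le> gdist G u v"
    unfolding gdist_def by (rule Inf_greatest) (auto dest!: assms)
  then show ?thesis by (metis Suc_ile_eq order_refl)
qed

lemma walk_adj: "walk G xs \<Longrightarrow> Suc j < length xs \<Longrightarrow> adj G (xs!j) (xs!Suc j)"
  by (simp add: walk_def)

lemma short_list: "xs \<noteq> [] \<Longrightarrow> length xs \<le> 4 \<Longrightarrow> (\<exists>a. xs = [a]) \<or> (\<exists>a b. xs = [a,b]) \<or> (\<exists>a b c. xs = [a,b,c]) \<or> (\<exists>a b c d. xs = [a,b,c,d])"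
  apply (cases xs; simp)
  apply (rename_tac l, case_tac l; simp)
  apply (rename_tac l, case_tac l; simp)
  apply (rename_tac l, case_tac l; simp)
  done

lemma Inl_Inl_walk:
  assumes "walk (FSSD m C) xs" "hd xs = Inl a" "last xs = Inl b" "a \<noteq> b" "length xs \<le> 4"
  shows "\<exists>e\<in>snd C. a \<in> e \<and> b \<in> e"
proof -
  have ne: "xs \<noteq> []" using assms(1) by (simp add: walk_def)
  from short_list[OF ne assms(5)] show ?thesis
  proof (elim disjE exE)
    fix x assume "xs = [x]" then show ?thesis using assms by simp
  next
    fix x y assume xs: "xs = [x, y]"
    have "adj (FSSD m C) x y" using walk_adj[OF assms(1), of 0] xs by simp
    then show ?thesis using assms xs by (simp add: adj_FSSD_Inl_Inl)
  next
    fix x y z assume xs: "xs = [x, y, z]"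
    have 1: "adj (FSSD m C) x y" using walk_adj[OF assms(1), of 0] xs by simp
    have 2: "adj (FSSD m C) y z" using walk_adj[OF assms(1), of 1] xs by simp
    show ?thesis
    proof (cases y)
      case (Inl y') then show ?thesis using 1 assms xs by (simp add: adj_FSSD_Inl_Inl)
    next
      case (Inr p)
      obtain e j where p: "p = (e, j)" by (cases p)
      show ?thesis using 1 2 assms xs Inr p by (auto simp: adj_FSSD_Inl_Inr adj_FSSD_Inr_Inl)
    qed
  next
    fix x y z w assume xs: "xs = [x, y, z, w]"
    have 1: "adj (FSSD m C) x y" using walk_adj[OF assms(1), of 0] xs by simp
    have 2: "adj (FSSD m C) y z" using walk_adj[OF assms(1), of 1] xs by simp
    have 3: "adj (FSSD m C) z w" using walk_adj[OF assms(1), of 2] xs by simp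
    show ?thesis
    proof (cases y)
      case (Inl y') then show ?thesis using 1 assms xs by (simp add: adj_FSSD_Inl_Inl)
    next
      case (Inr p)
      show ?thesis
      proof (cases z)
        case (Inl z') then show ?thesis using 3 assms xs by (simp add: adj_FSSD_Inl_Inl)
      next
        case (Inr q) then show ?thesis using 2 \<open>y = Inr p\<close> by (simp add: adj_FSSD_Inr_Inr)
      qed
    qed
  qed
qed

lemma Inr_Inr_walk:
  assumes "walk (FSSD m C) xs" "hd xs = Inr p" "last xs = Inr q" "p \<noteq> q" "length xs \<le> 2"
  shows False
proof -
  have ne: "xs \<noteq> []" using assms(1) by (simp add: walk_def)
  have l4: "length xs \<le> 4" using assms(5) by simp
  from short_list[OF ne l4] show ?thesis
  proof (elim disjE exE)
    fix x assume "xs = [x]" then show ?thesis using assms by simp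
  next
    fix x y assume xs: "xs = [x, y]"
    have "adj (FSSD m C) x y" using walk_adj[OF assms(1), of 0] xs by simp
    then show ?thesis using assms xs by (simp add: adj_FSSD_Inr_Inr)
  qed (use assms(5) in auto)
qed

lemma cycle_edge:
  assumes "e \<in> snd (cycle_graph n)" "a \<in> e" "b \<in> e" "a \<noteq> b"
  shows "\<exists>i<n. (a = i \<and> b = Suc i mod n) \<or> (b = i \<and> a = Suc i mod n)"
  using assms by (auto simp: cycle_graph_def)


lemma colorable_from_col:
  fixes col :: "nat \<Rightarrow> nat"
  assumes K: "K \<ge> 1"
    and range: "\<forall>a<n. col a \<in> {2..K}"
    and diff: "\<forall>i<n. col i \<noteq> col (Suc i mod n)"
    and big: "\<forall>a<n. \<forall>b<n. a \<noteq> b \<longrightarrow> col a = col b \<longrightarrow> col a \<le> 3"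
  shows "packing_colorable (FSSD m (cycle_graph n)) K"
proof -
  let ?G = "FSSD m (cycle_graph n)"
  define c :: "nat + (nat set \<times> nat) \<Rightarrow> nat" where "c = case_sum col (\<lambda>_. 1)"
  have fstG: "fst ?G = Inl ` {0..<n} \<union> {Inr (e, j) | e j. e \<in> snd (cycle_graph n) \<and> j < m}"
    by (simp add: FSSD_def cycle_graph_def)
  have A: "\<forall>v\<in>fst ?G. c v \<in> {1..K}"
    using range K unfolding fstG c_def by auto
  have B: "packing ?G i {v \<in> fst ?G. c v = i}" if i: "i \<in> {1..K}" for i
    unfolding packing_def
  proof (intro conjI ballI impI)
    show "{v \<in> fst ?G. c v = i} \<subseteq> fst ?G" by blast
  next
    fix u v assume u: "u \<in> {v \<in> fst ?G. c v = i}" and v: "v \<in> {v \<in> fst ?G. c v = i}" and uv: "u \<noteq> v"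
    show "enat i < gdist ?G u v"
    proof (cases u)
      case (Inl a)
      then have a: "a < n" "col a = i" using u by (auto simp: fstG c_def)
      show ?thesis
      proof (cases v)
        case (Inl b)
        then have b: "b < n" "col b = i" using v by (auto simp: fstG c_def)
        have ab: "a \<noteq> b" using uv Inl \<open>u = Inl a\<close> by simp
        have i3: "i \<le> 3" using big[rule_format, OF a(1) b(1) ab] a b by simp
        show ?thesis
        proof (rule gdist_gt)
          fix xs assume w: "walk ?G xs" "hd xs = u" "last xs = v"
          show "i < length xs - 1"
          proof (rule ccontr)
            assume "\<not> i < length xs - 1"
            then have "length xs \<le> 4" using i3 by linarith
            then obtain e where "e \<in> snd (cycle_graph n)" "a \<in> e" "b \<in> e"
              using Inl_Inl_walk[OF w(1)] w Inl \<open>u = Inl a\<close> ab by blast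
            then obtain j where j: "j < n" "(a = j \<and> b = Suc j mod n) \<or> (b = j \<and> a = Suc j mod n)"
              using cycle_edge ab by blast
            have cj: "col j \<noteq> col (Suc j mod n)" using diff[rule_format, OF j(1)] .
            show False using j(2) a(2) b(2) cj by (elim disjE conjE) simp_all
          qed
        qed
      next
        case (Inr q)
        have "col a \<ge> 2" using range a(1) by auto
        moreover have "c v = 1" using Inr by (simp add: c_def)
        ultimately show ?thesis using v a(2) by simp
      qed
    next
      case (Inr p)
      then have i1: "i = 1" using u by (simp add: c_def)
      show ?thesis
      proof (cases v)
        case (Inl b)
        then have "b < n" "col b = i" using v by (auto simp: fstG c_def)
        then show ?thesis using range i1 by fastforce
      next
        case (Inr q)
        show ?thesis
        proof (rule gdist_gt)
          fix xs assume w: "walk ?G xs" "hd xs = u" "last xs = v"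
          show "i < length xs - 1"
          proof (rule ccontr)
            assume "\<not> i < length xs - 1"
            then have "length xs \<le> 2" using i1 by linarith
            moreover have "p \<noteq> q" using uv Inr \<open>u = Inr p\<close> by simp
            moreover have "hd xs = Inr p" "last xs = Inr q" using w Inr \<open>u = Inr p\<close> by simp_all
            ultimately show False using Inr_Inr_walk[OF w(1)] by blast
          qed
        qed
      qed
    qed
  qed
  show ?thesis unfolding packing_colorable_def by (rule exI[of _ c]) (use A B in blast)
qed

lemma Suc_mod_lt: "i < n \<Longrightarrow> Suc i mod n = (if Suc i = n then 0 else Suc i)"
  by (simp add: mod_Suc)

lemma upper_even:
  assumes "n \<ge> 3" "even n"
  shows "packing_colorable (FSSD m (cycle_graph n)) 3"
  apply (rule colorable_from_col[where col = "\<lambda>a. if even a then 2 else 3"])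
  using assms by (auto simp: Suc_mod_lt)

lemma upper_odd:
  assumes "n \<ge> 3" "odd n"
  shows "packing_colorable (FSSD m (cycle_graph n)) 4"
  apply (rule colorable_from_col[where col = "\<lambda>a. if a = 0 then 4 else if odd a then 2 else 3"])
  using assms by (auto simp: Suc_mod_lt)


lemma seq2:
  fixes z :: "nat \<Rightarrow> nat"
  assumes rng: "\<And>p. z p \<in> {1,2}"
    and con: "\<And>p d. 1 \<le> d \<Longrightarrow> d \<le> 3 \<Longrightarrow> d \<le> z p \<Longrightarrow> z (p + d) = z p \<Longrightarrow> False"
  shows False
proof -
  have n11: "\<not> (z p = 1 \<and> z (Suc p) = 1)" for p using con[of 1 p] by auto
  have n22: "\<not> (z p = 2 \<and> z (Suc p) = 2)" for p using con[of 1 p] by auto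
  have alt: "z (Suc p) = (if z p = 1 then 2 else 1)" for p
    using rng[of p] rng[of "Suc p"] n11[of p] n22[of p] by auto
  have "z (Suc (Suc 0)) = z 0" using alt[of 0] alt[of "Suc 0"] rng[of 0] by auto
  moreover have "z (Suc (Suc (Suc 0))) = z (Suc 0)" using alt[of "Suc 0"] alt[of "Suc (Suc 0)"] rng[of "Suc 0"] by auto
  moreover have "z 0 = 2 \<or> z (Suc 0) = 2" using alt[of 0] rng[of 0] by auto
  ultimately show False using con[of 2 0] con[of 2 1] by (auto simp: numeral_2_eq_2 numeral_3_eq_3)
qed

lemma seq3:
  fixes z :: "nat \<Rightarrow> nat"
  assumes L: "L \<ge> 2"
    and rng: "\<And>p. z p \<in> {1,2,3}"
    and per: "\<And>p. z (p + L) = z p"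
    and con: "\<And>p d. 1 \<le> d \<Longrightarrow> d \<le> 3 \<Longrightarrow> d \<le> z p \<Longrightarrow> z (p + d) = z p \<Longrightarrow> False"
  shows "4 dvd L"
proof -
  have c1: "z (p + 1) \<noteq> z p" for p using con[of 1 p] rng[of p] by auto
  have c2: "z p \<ge> 2 \<Longrightarrow> z (p + 2) \<noteq> z p" for p using con[of 2 p] by auto
  have c3: "z p = 3 \<Longrightarrow> z (p + 3) \<noteq> z p" for p using con[of 3 p] by auto
  have S1: "z p = 1 \<or> z (p + 1) = 1" for p
  proof (rule ccontr)
    assume H: "\<not> (z p = 1 \<or> z (p + 1) = 1)"
    define j where "j = p + L - 2"
    have e2: "j + 2 = p + L" using L by (simp add: j_def)
    have j2: "z (j + 2) = z p" unfolding e2 by (rule per)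
    have e3: "j + 3 = (p + 1) + L" using L by (simp add: j_def)
    have j3: "z (j + 3) = z (p + 1)" unfolding e3 by (rule per)
    have zp: "z p \<in> {2,3}" "z (p+1) \<in> {2,3}" using rng[of p] rng[of "p+1"] H by auto
    have ne: "z (p+1) \<noteq> z p" using c1 .
    show False
    proof (cases "z p = 2")
      case True
      then have z1: "z (p+1) = 3" using zp ne by auto
      have a: "z (j+1) = 1"
        using rng[of "j+1"] c1[of "j+1"] c2[of "j+1"] j2 j3 True z1
        by (auto simp: add.assoc numeral_3_eq_3 numeral_2_eq_2)
      show False
        using rng[of j] c1[of j] c2[of j] c3[of j] a j2 j3 True z1
        by (auto simp: add.assoc numeral_3_eq_3 numeral_2_eq_2)
    next
      case False
      then have z0: "z p = 3" and z1: "z (p+1) = 2" using zp ne by auto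
      have a: "z (p+2) = 1"
        using rng[of "p+2"] c1[of "p+1"] c2[of p] z0 z1
        by (auto simp: add.assoc numeral_3_eq_3 numeral_2_eq_2)
      show False
        using rng[of "p+3"] c1[of "p+2"] c2[of "p+1"] c3[of p] a z0 z1
        by (auto simp: add.assoc numeral_3_eq_3 numeral_2_eq_2)
    qed
  qed
  have S2: "z (Suc p) = 1 \<longleftrightarrow> z p \<noteq> 1" for p
    using S1[of p] c1[of p] by auto
  have S3: "z q = 1 \<longleftrightarrow> (z 0 = 1 \<longleftrightarrow> even q)" for q
  proof (induction q)
    case (Suc q) then show ?case using S2[of q] by auto
  qed simp
  have evL: "even L"
    using S3[of L] per[of 0] by auto
  define s where "s = (if z 0 = 1 then 1 else (0::nat))"
  have zs: "z (s + 2 * i) \<noteq> 1" for i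
    using S3[of "s + 2*i"] by (auto simp: s_def)
  have S4: "z (s + 2 * i) = z s \<longleftrightarrow> even i" for i
  proof (induction i)
    case 0 then show ?case by simp
  next
    case (Suc i)
    have r1: "z (s + 2*i) \<in> {2,3}" using zs[of i] rng[of "s+2*i"] by auto
    have r2: "z (s + 2*Suc i) \<in> {2,3}" using zs[of "Suc i"] rng[of "s+2*Suc i"] by auto
    have r0: "z s \<in> {2,3}" using zs[of 0] rng[of s] by auto
    have "z (s + 2*Suc i) \<noteq> z (s + 2*i)" using c2[of "s+2*i"] r1 by (auto simp: add.assoc numeral_3_eq_3 numeral_2_eq_2)
    then show ?case using Suc r1 r2 r0 by auto
  qed
  have "z (s + 2 * (L div 2)) = z s" using per[of s] evL by simp
  then have "even (L div 2)" using S4 by blast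
  then show ?thesis using evL by (metis dvd_mult_div_cancel even_two_times_div_two mult_dvd_mono numeral_Bit0_eq_double dvd_refl)
qed


definition ed :: "nat \<Rightarrow> nat \<Rightarrow> nat set" where
  "ed n i = {i, Suc i mod n}"

definition vv :: "nat \<Rightarrow> nat \<Rightarrow> nat + (nat set \<times> nat)" where
  "vv n k = (if even (k mod (2*n)) then Inl (k mod (2*n) div 2) else Inr (ed n (k mod (2*n) div 2), 0))"

lemma mdiv: "n > 0 \<Longrightarrow> k mod (2*n) div 2 < (n::nat)"
proof -
  assume "n > 0"
  then have "k mod (2*n) < 2 * n" by simp
  then have "k mod (2*n) < n * 2" by (simp add: mult.commute)
  then show ?thesis by (rule less_mult_imp_div_less)
qed

lemma ed_in: "i < n \<Longrightarrow> ed n i \<in> snd (cycle_graph n)"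
  by (auto simp: ed_def cycle_graph_def)

lemma ed_inj:
  assumes "n \<ge> 3" "i < n" "i' < n" "ed n i = ed n i'"
  shows "i = i'"
proof (rule ccontr)
  assume ne: "i \<noteq> i'"
  have "i \<in> ed n i'" "i' \<in> ed n i" using assms(4) by (auto simp: ed_def)
  then have "i = Suc i' mod n" "i' = Suc i mod n" using ne by (auto simp: ed_def)
  then have h1: "i = (if Suc i' = n then 0 else Suc i')" and h2: "i' = (if Suc i = n then 0 else Suc i)"
    using Suc_mod_lt[OF assms(2)] Suc_mod_lt[OF assms(3)] by simp_all
  show False
  proof (cases "Suc i' = n")
    case True
    then have "i = 0" using h1 by simp
    then show False using h2 True assms(1) by (cases "Suc 0 = n") simp_all
  next
    case False
    then have "i = Suc i'" using h1 by simp
    then show False using h2 assms(1) by (cases "Suc i = n") simp_all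
  qed
qed

lemma vv_period: "vv n (k + 2*n) = vv n k"
  by (simp add: vv_def)

lemma vv_in:
  assumes "n \<ge> 3" "m \<ge> 1"
  shows "vv n k \<in> fst (FSSD m (cycle_graph n))"
proof -
  have r: "k mod (2*n) div 2 < n" using assms(1) by (simp add: mdiv)
  show ?thesis
    using r ed_in[OF r] assms by (auto simp: vv_def FSSD_def cycle_graph_def)
qed

lemma vv_adj:
  assumes "n \<ge> 3" "m \<ge> 1"
  shows "adj (FSSD m (cycle_graph n)) (vv n k) (vv n (Suc k))"
proof -
  define r where "r = k mod (2*n)"
  have rl: "r < 2*n" using assms(1) by (simp add: r_def)
  have sr: "Suc k mod (2*n) = (if Suc r = 2*n then 0 else Suc r)"
    by (simp add: r_def mod_Suc)
  show ?thesis
  proof (cases "even r")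
    case True
    then have "Suc r \<noteq> 2*n" by presburger
    then have "Suc k mod (2*n) = Suc r" using sr by simp
    moreover have "Suc r div 2 = r div 2" using True by simp
    moreover have "r div 2 < n" using rl by simp
    ultimately show ?thesis using True assms ed_in[of "r div 2" n]
      by (simp add: vv_def r_def[symmetric] adj_FSSD_Inl_Inr ed_def)
  next
    case False
    then obtain i where i: "r = 2*i+1" by (metis oddE)
    have il: "i < n" using rl i by simp
    have rd: "r div 2 = i" using i by simp
    show ?thesis
    proof (cases "Suc r = 2*n")
      case True
      then have "Suc k mod (2*n) = 0" using sr by simp
      moreover have "Suc i = n" using True i by simp
      ultimately show ?thesis using False assms ed_in[OF il] rd
        by (simp add: vv_def r_def[symmetric] adj_FSSD_Inr_Inl ed_def)
    next
      case F2: False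
      then have "Suc k mod (2*n) = Suc r" using sr by simp
      moreover have "Suc i < n" using F2 i rl by simp
      moreover have "Suc r div 2 = Suc i" using i by simp
      ultimately show ?thesis using False assms ed_in[OF il] rd i
        by (simp add: vv_def r_def[symmetric] adj_FSSD_Inr_Inl ed_def)
    qed
  qed
qed

lemma vv_inj:
  assumes "n \<ge> 3" "vv n k = vv n k'"
  shows "k mod (2*n) = k' mod (2*n)"
proof -
  define r where "r = k mod (2*n)"
  define r' where "r' = k' mod (2*n)"
  have rl: "r div 2 < n" "r' div 2 < n" using assms(1) by (simp_all add: r_def r'_def mdiv)
  show ?thesis
  proof (cases "even r")
    case True
    then have "even r'" "r div 2 = r' div 2" using assms(2) by (auto simp: vv_def r_def[symmetric] r'_def[symmetric] split: if_splits)
    then show ?thesis using True unfolding r_def[symmetric] r'_def[symmetric] by (metis dvd_mult_div_cancel)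
  next
    case False
    then have "odd r'" "ed n (r div 2) = ed n (r' div 2)" using assms(2) by (auto simp: vv_def r_def[symmetric] r'_def[symmetric] split: if_splits)
    moreover have "r div 2 = r' div 2" using ed_inj[OF assms(1) rl] calculation(2) by blast
    ultimately show ?thesis using False unfolding r_def[symmetric] r'_def[symmetric]
      by (metis odd_two_times_div_two_succ)
  qed
qed

lemma vv_distinct:
  assumes "n \<ge> 3" "0 < d" "d < 2*n"
  shows "vv n (k + d) \<noteq> vv n k"
proof
  assume "vv n (k + d) = vv n k"
  then have "(k + d) mod (2*n) = k mod (2*n)" using vv_inj assms(1) by blast
  then have "2*n dvd (k + d) - k" by (subst mod_eq_dvd_iff_nat[symmetric]) simp_all
  then have "2*n dvd d" by simp
  then show False using assms by (auto dest: dvd_imp_le)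
qed

lemma vv_gdist:
  assumes "n \<ge> 3" "m \<ge> 1"
  shows "gdist (FSSD m (cycle_graph n)) (vv n k) (vv n (k + d)) \<le> enat d"
proof -
  define xs where "xs = map (\<lambda>i. vv n (k + i)) [0..<Suc d]"
  have "walk (FSSD m (cycle_graph n)) xs"
    unfolding walk_def
  proof (intro conjI allI impI)
    show "xs \<noteq> []" by (simp add: xs_def)
    show "set xs \<subseteq> fst (FSSD m (cycle_graph n))" using vv_in[OF assms] by (auto simp: xs_def)
    fix j assume "Suc j < length xs"
    then show "adj (FSSD m (cycle_graph n)) (xs ! j) (xs ! Suc j)"
      using vv_adj[OF assms, of "k + j"] by (simp add: xs_def nth_append del: upt_Suc)
  qed
  moreover have "hd xs = vv n k" by (simp add: xs_def hd_map del: upt_Suc)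
  moreover have "last xs = vv n (k + d)" by (simp add: xs_def last_map del: upt_Suc)
  moreover have "length xs - 1 = d" by (simp add: xs_def)
  ultimately show ?thesis using gdist_le by metis
qed


lemma lower:
  assumes n: "n \<ge> 3" and m: "m \<ge> 1" and col: "packing_colorable (FSSD m (cycle_graph n)) k"
  shows "k \<ge> 3 \<and> (k \<le> 3 \<longrightarrow> even n)"
proof -
  let ?G = "FSSD m (cycle_graph n)"
  obtain c where c1: "\<forall>v\<in>fst ?G. c v \<in> {1..k}"
    and c2: "\<forall>i\<in>{1..k}. packing ?G i {v \<in> fst ?G. c v = i}"
    using col unfolding packing_colorable_def by blast
  define z where "z p = c (vv n p)" for p
  have rng: "z p \<in> {1..k}" for p using c1 vv_in[OF n m] by (simp add: z_def)
  have con: False if d: "1 \<le> d" "d \<le> 3" "d \<le> z p" "z (p + d) = z p" for p d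
  proof -
    let ?i = "z p"
    have pk: "packing ?G ?i {v \<in> fst ?G. c v = ?i}" using c2 rng[of p] by blast
    have ne: "vv n (p + d) \<noteq> vv n p" using vv_distinct[OF n, of d p] d n by simp
    have "enat ?i < gdist ?G (vv n p) (vv n (p + d))"
      using pk ne vv_in[OF n m, of p] vv_in[OF n m, of "p + d"] d(4)
      unfolding packing_def z_def by auto
    moreover have "gdist ?G (vv n p) (vv n (p + d)) \<le> enat d" by (rule vv_gdist[OF n m])
    ultimately show False using d(3) by (metis enat_ord_simps(1) le_less_trans less_le_not_le)
  qed
  have k3: "k \<ge> 3"
  proof (rule ccontr)
    assume "\<not> k \<ge> 3"
    then have "z p \<in> {1,2}" for p using rng[of p] by auto
    then show False using seq2[of z] con by blast
  qed
  moreover have "even n" if "k \<le> 3"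
  proof -
    have r3: "z p \<in> {1,2,3}" for p using rng[of p] that by auto
    have per: "\<And>p. z (p + 2*n) = z p" by (simp add: z_def vv_period)
    have "4 dvd 2*n" using seq3[of "2*n" z, OF _ r3 per] con n by fastforce
    then show ?thesis by presburger
  qed
  ultimately show ?thesis by blast
qed

theorem proposition7:
  fixes n m :: nat
  assumes "n \<ge> 3" and "m \<ge> 1"
  shows "packing_chromatic_number (FSSD m (cycle_graph n)) = (if even n then 3 else 4)"
proof (cases "even n")
  case True
  have "(LEAST k. packing_colorable (FSSD m (cycle_graph n)) k) = 3"
  proof (rule Least_equality)
    show "packing_colorable (FSSD m (cycle_graph n)) 3" using upper_even assms True by blast
    fix y assume "packing_colorable (FSSD m (cycle_graph n)) y"
    then show "3 \<le> y" using lower assms by blast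
  qed
  then show ?thesis using True by (simp add: packing_chromatic_number_def)
next
  case False
  have "(LEAST k. packing_colorable (FSSD m (cycle_graph n)) k) = 4"
  proof (rule Least_equality)
    show "packing_colorable (FSSD m (cycle_graph n)) 4" using upper_odd assms False by blast
    fix y assume "packing_colorable (FSSD m (cycle_graph n)) y"
    then have "y \<ge> 3 \<and> (y \<le> 3 \<longrightarrow> even n)" using lower assms by blast
    then show "4 \<le> y" using False by auto
  qed
  then show ?thesis using False by (simp add: packing_chromatic_number_def)
qed

end
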